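(* Let $X$ be an abelian variety over a field $K$ of characteristic different from $2$, and let $G=\bar\rho_{2,X}(\mathrm{Gal}(K))\subset\mathrm{Aut}_{\mathbb F_2}(X_2)$. Assume: (a) $\dim X=2$; (b) $G\cong\mathbb A_5$; (c) $X_2$ is a simple $G$-module; (d) $\mathrm{End}_G(X_2)\cong\mathbb F_4$. Identify $\mathbb F_2$ with $\mathbb F_2\cdot\mathrm{Id}_{X_2}$ and $\mathbb F_4$ with $\mathrm{End}_G(X_2)$. Let $R$ be an $\mathbb F_2$-subalgebra of $\mathrm{End}_{\mathbb F_2}(X_2)$ containing $\mathrm{Id}_{X_2}$ such that $uRu^{-1}\subset R$ for all $u\in G$. Then $R$ equals one of: $\mathbb F_2$; $\mathbb F_4$; $\mathrm{End}_{\mathbb F_4}(X_2)$; $\mathrm{End}_{\mathbb F_2}(X_2)$.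
   Context: $X_2$ is the $4$-dimensional $\mathbb F_2$-vector space of points of order dividing $2$ of $X$ over an algebraic closure of $K$, and $\bar\rho_{2,X}:\mathrm{Gal}(K)\to\mathrm{Aut}_{\mathbb F_2}(X_2)$ is the Galois action. $X_2$ is regarded as an $\mathbb F_4$-vector space via $\mathrm{End}_G(X_2)\cong\mathbb F_4$. *)

theory Defs
  imports "HOL-Analysis.Analysis" "HOL-Library.Z2" "HOL-Algebra.Sym_Groups" "HOL-Algebra.Ring"
begin

text \<open>X_2 is modelled as the F_2-vector space bit^4 (bit = F_2); End_{F_2}(X_2) is the
  set of all 4x4 matrices over F_2, acting on column vectors via *v.\<close>

type_synonym vec2 = "bit ^ 4"
type_synonym end2 = "bit ^ 4 ^ 4"

definition mat_monoid :: "end2 set \<Rightarrow> end2 monoid" where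
  "mat_monoid G = \<lparr>carrier = G, mult = (**), one = mat 1\<rparr>"

definition mat_ring :: "end2 set \<Rightarrow> end2 ring" where
  "mat_ring C = \<lparr>carrier = C, mult = (**), one = mat 1, zero = 0, add = (+)\<rparr>"

text \<open>F_2-linear subspace of X_2 (over F_2 scalar multiplication is trivial).\<close>
definition f2_subspace :: "vec2 set \<Rightarrow> bool" where
  "f2_subspace W \<longleftrightarrow> 0 \<in> W \<and> (\<forall>x\<in>W. \<forall>y\<in>W. x + y \<in> W)"

definition simple_module :: "end2 set \<Rightarrow> bool" where
  "simple_module G \<longleftrightarrow>
     (\<forall>W. f2_subspace W \<and> (\<forall>g\<in>G. \<forall>w\<in>W. g *v w \<in> W) \<longrightarrow> W = {0} \<or> W = UNIV)"

text \<open>Centralizer of a set of matrices: End_G(X_2) for G, End_{F_4}(X_2) for F_4.\<close>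
definition centralizer :: "end2 set \<Rightarrow> end2 set" where
  "centralizer S = {M. \<forall>s\<in>S. M ** s = s ** M}"

definition f2_subalgebra :: "end2 set \<Rightarrow> bool" where
  "f2_subalgebra R \<longleftrightarrow> 0 \<in> R \<and> mat 1 \<in> R \<and>
     (\<forall>x\<in>R. \<forall>y\<in>R. x + y \<in> R \<and> x ** y \<in> R)"

end

theory Submission
  imports Defs
begin

datatype f4 = Z4 | O4 | W4 | V4

instantiation f4 :: field
begin
definition zero_f4 :: f4 where "zero_f4 = Z4"
definition one_f4 :: f4 where "one_f4 = O4"
fun plus_f4 :: "f4 \<Rightarrow> f4 \<Rightarrow> f4" where
  "plus_f4 Z4 y = y"
| "plus_f4 x Z4 = x"
| "plus_f4 O4 O4 = Z4" | "plus_f4 O4 W4 = V4" | "plus_f4 O4 V4 = W4"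
| "plus_f4 W4 O4 = V4" | "plus_f4 W4 W4 = Z4" | "plus_f4 W4 V4 = O4"
| "plus_f4 V4 O4 = W4" | "plus_f4 V4 W4 = O4" | "plus_f4 V4 V4 = Z4"
fun times_f4 :: "f4 \<Rightarrow> f4 \<Rightarrow> f4" where
  "times_f4 Z4 y = Z4"
| "times_f4 x Z4 = Z4"
| "times_f4 O4 y = y"
| "times_f4 x O4 = x"
| "times_f4 W4 W4 = V4" | "times_f4 W4 V4 = O4"
| "times_f4 V4 W4 = O4" | "times_f4 V4 V4 = W4"
definition uminus_f4 :: "f4 \<Rightarrow> f4" where "uminus_f4 x = x"
definition minus_f4 :: "f4 \<Rightarrow> f4 \<Rightarrow> f4" where "minus_f4 x y = x + y"
fun inverse_f4 :: "f4 \<Rightarrow> f4" where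
  "inverse_f4 Z4 = Z4" | "inverse_f4 O4 = O4" | "inverse_f4 W4 = V4" | "inverse_f4 V4 = W4"
definition divide_f4 :: "f4 \<Rightarrow> f4 \<Rightarrow> f4" where "divide_f4 x y = x * inverse y"
instance
proof
  fix a b c :: f4
  show "a * b * c = a * (b * c)" by (cases a; cases b; cases c; simp)
  show "a * b = b * a" by (cases a; cases b; simp)
  show "1 * a = a" by (cases a; simp add: one_f4_def)
  show "a + b + c = a + (b + c)" by (cases a; cases b; cases c; simp)
  show "a + b = b + a" by (cases a; cases b; simp)
  show "0 + a = a" by (cases a; simp add: zero_f4_def)
  show "- a + a = 0" by (cases a; simp add: zero_f4_def uminus_f4_def)
  show "a - b = a + - b" by (simp add: minus_f4_def uminus_f4_def)
  show "(a + b) * c = a * c + b * c" by (cases a; cases b; cases c; simp)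
  show "(0::f4) \<noteq> 1" by (simp add: zero_f4_def one_f4_def)
  show "a \<noteq> 0 \<Longrightarrow> inverse a * a = 1" by (cases a; simp add: zero_f4_def one_f4_def)
  show "divide a b = a * inverse b" by (simp add: divide_f4_def)
  show "inverse (0::f4) = 0" by (simp add: zero_f4_def)
qed
end

lemma f4_zero[simp]: "(0::f4) = Z4" by (simp add: zero_f4_def)
lemma f4_one[simp]: "(1::f4) = O4" by (simp add: one_f4_def)
lemma f4_uminus[simp]: "- (x::f4) = x" by (simp add: uminus_f4_def)
lemma f4_minus[simp]: "(x::f4) - y = x + y" by (simp add: minus_f4_def)
lemma f4_add_self[simp]: "(x::f4) + x = 0" "(x::f4) + (x + y) = y"
  by (cases x; cases y; simp)+
lemma f4_numeral_even[simp]: "numeral (Num.Bit0 n) = (0::f4)"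
  by (metis f4_add_self(1) mult_2 numeral_Bit0 mult_zero_right numeral_Bit0_eq_double)
lemma f4_numeral_odd[simp]: "numeral (Num.Bit1 n) = (1::f4)"
  by (simp add: numeral_Bit1)
lemma f4_triv[simp]: "x * Z4 = Z4" "x * O4 = x" "x + Z4 = x" "Z4 * x = Z4" "O4 * x = x" "Z4 + x = x"
  by (cases x; simp)+
lemma f4_exhaust_all: "(\<forall>x::f4. P x) \<longleftrightarrow> P Z4 \<and> P O4 \<and> P W4 \<and> P V4"
  by (metis f4.exhaust)
lemma f4_ex: "(\<exists>x::f4. P x) \<longleftrightarrow> P Z4 \<or> P O4 \<or> P W4 \<or> P V4"
  by (metis f4.exhaust)
lemma UNIV_f4: "(UNIV::f4 set) = {Z4,O4,W4,V4}" using f4.exhaust by auto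
instance f4 :: finite by standard (simp add: UNIV_f4)
lemma card_f4: "CARD(f4) = 4" by (simp add: UNIV_f4)


datatype m2 = M2 f4 f4 f4 f4

fun mmul :: "m2 \<Rightarrow> m2 \<Rightarrow> m2" where
  "mmul (M2 a b c d) (M2 e f g h) = M2 (a*e+b*g) (a*f+b*h) (c*e+d*g) (c*f+d*h)"
fun madd :: "m2 \<Rightarrow> m2 \<Rightarrow> m2" where
  "madd (M2 a b c d) (M2 e f g h) = M2 (a+e) (b+f) (c+g) (d+h)"
definition fr :: "f4 \<Rightarrow> f4" where "fr x = x * x"
fun mfrob :: "m2 \<Rightarrow> m2" where
  "mfrob (M2 a b c d) = M2 (fr a) (fr b) (fr c) (fr d)"
definition mI :: m2 where "mI = M2 1 0 0 1"
definition mZ :: m2 where "mZ = M2 0 0 0 0"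
definition msc :: "f4 \<Rightarrow> m2" where "msc l = M2 l 0 0 l"
fun mdet :: "m2 \<Rightarrow> f4" where "mdet (M2 a b c d) = a*d + b*c"
fun madj :: "m2 \<Rightarrow> m2" where "madj (M2 a b c d) = M2 d b c a"

type_synonym e2 = "m2 \<times> m2"
fun emul :: "e2 \<Rightarrow> e2 \<Rightarrow> e2" where
  "emul (A,B) (C,D) = (madd (mmul A C) (mmul B (mfrob D)), madd (mmul A D) (mmul B (mfrob C)))"
fun eadd :: "e2 \<Rightarrow> e2 \<Rightarrow> e2" where
  "eadd (A,B) (C,D) = (madd A C, madd B D)"
definition conjE :: "m2 \<Rightarrow> e2 \<Rightarrow> e2" where
  "conjE g x = emul (emul (g, mZ) x) (madj g, mZ)"

lemma fr_simps[simp]: "fr Z4 = Z4" "fr O4 = O4" "fr W4 = V4" "fr V4 = W4"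
  by (simp_all add: fr_def)

lemmas ev_simps = mI_def mZ_def msc_def conjE_def

definition ut :: "f4 \<Rightarrow> m2" where "ut t = M2 1 t 0 1"
definition sw :: m2 where "sw = M2 0 1 1 0"
definition g0 :: m2 where "g0 = M2 0 1 1 W4"


definition good :: "e2 set \<Rightarrow> bool" where
  "good R \<longleftrightarrow> (mZ,mZ) \<in> R \<and> (mI,mZ) \<in> R \<and> (\<forall>x\<in>R. \<forall>y\<in>R. eadd x y \<in> R \<and> emul x y \<in> R)
     \<and> (\<forall>g x. mdet g = 1 \<longrightarrow> x \<in> R \<longrightarrow> conjE g x \<in> R)"

lemma goodD:
  assumes "good R"
  shows "(mZ,mZ) \<in> R" "(mI,mZ) \<in> R" "x \<in> R \<Longrightarrow> y \<in> R \<Longrightarrow> eadd x y \<in> R"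
    "x \<in> R \<Longrightarrow> y \<in> R \<Longrightarrow> emul x y \<in> R" "mdet g = 1 \<Longrightarrow> x \<in> R \<Longrightarrow> conjE g x \<in> R"
  using assms unfolding good_def by blast+

lemma conjE_add: "conjE g (eadd x y) = eadd (conjE g x) (conjE g y)"
  apply (cases g; cases x; cases y)
  apply (rename_tac a b c d A B C D)
  apply (case_tac A; case_tac B; case_tac C; case_tac D)
  apply (simp add: conjE_def mZ_def algebra_simps fr_def)
  done

definition Sproj :: "e2 \<Rightarrow> e2" where
  "Sproj x = eadd x (eadd (conjE (M2 Z4 V4 W4 O4) x) (eadd (conjE (M2 O4 V4 W4 Z4) x)
     (eadd (conjE (M2 W4 Z4 O4 V4) x) (eadd (conjE (M2 W4 Z4 V4 V4) x) (eadd (conjE (M2 W4 V4 Z4 V4) x)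
     (eadd (conjE (M2 V4 Z4 O4 W4) x) (eadd (conjE (M2 V4 Z4 V4 W4) x) (conjE (M2 V4 V4 Z4 W4) x))))))))"

lemma eadd_ac: "eadd x y = eadd y x" "eadd (eadd x y) z = eadd x (eadd y z)"
  "eadd x (eadd y z) = eadd y (eadd x z)"
  by (cases x; cases y; cases z; rename_tac A B C D E F; case_tac A; case_tac B; case_tac C;
      case_tac D; case_tac E; case_tac F; simp add: algebra_simps)+

lemma Sproj_add: "Sproj (eadd x y) = eadd (Sproj x) (Sproj y)"
  unfolding Sproj_def conjE_add by (simp only: eadd_ac)


lemma Sproj_A: "Sproj (A, mZ) = (A, mZ)"
  by (cases A; rename_tac a b c d; case_tac a; case_tac b; case_tac c; case_tac d;
      simp add: Sproj_def conjE_def mZ_def)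

lemma Sproj_B: "Sproj (mZ, B) = (mZ, mZ)"
  by (cases B; rename_tac a b c d; case_tac a; case_tac b; case_tac c; case_tac d;
      simp add: Sproj_def conjE_def mZ_def)

lemma Sproj_eq: "Sproj (A, B) = (A, mZ)"
proof -
  have e: "(A,B) = eadd (A,mZ) (mZ,B)"
    by (cases A; cases B; simp add: mZ_def)
  have e2: "eadd (A,mZ) (mZ,mZ) = (A,mZ)"
    by (cases A; simp add: mZ_def)
  have "Sproj (A,B) = eadd (Sproj (A,mZ)) (Sproj (mZ,B))"
    by (subst e, rule Sproj_add)
  also have "\<dots> = (A,mZ)" unfolding Sproj_A Sproj_B e2 ..
  finally show ?thesis .
qed

lemma Sproj_in: assumes "good R" "x \<in> R" shows "Sproj x \<in> R"
proof -
  note g = goodD[OF assms(1)]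
  have d: "mdet (M2 Z4 V4 W4 O4) = 1" "mdet (M2 O4 V4 W4 Z4) = 1" "mdet (M2 W4 Z4 O4 V4) = 1"
    "mdet (M2 W4 Z4 V4 V4) = 1" "mdet (M2 W4 V4 Z4 V4) = 1" "mdet (M2 V4 Z4 O4 W4) = 1"
    "mdet (M2 V4 Z4 V4 W4) = 1" "mdet (M2 V4 V4 Z4 W4) = 1" by simp_all
  show ?thesis unfolding Sproj_def
    by (intro g(3) g(5)[OF _ assms(2)] d assms(2))
qed

lemma proj_in: assumes "good R" "(A,B) \<in> R" shows "(A,mZ) \<in> R" "(mZ,B) \<in> R"
proof -
  show a: "(A,mZ) \<in> R" using Sproj_in[OF assms] Sproj_eq by simp
  have "eadd (A,B) (A,mZ) = (mZ,B)"
    by (cases A; cases B; simp add: mZ_def)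
  then show "(mZ,B) \<in> R" using goodD(3)[OF assms(1) assms(2) a] by simp
qed


lemma scal_all:
  assumes "good R" "(msc W4, mZ) \<in> R" shows "(msc l, mZ) \<in> R"
proof -
  note g = goodD[OF assms(1)]
  have "emul (msc W4, mZ) (msc W4, mZ) = (msc V4, mZ)" by (simp add: msc_def mZ_def)
  then have v: "(msc V4, mZ) \<in> R" using g(4)[OF assms(2) assms(2)] by simp
  show ?thesis using g(1) g(2) v assms(2)
    by (cases l; simp add: msc_def mZ_def mI_def)
qed

lemma ns_c_aux1: "c \<noteq> Z4 \<Longrightarrow>
  (let y = eadd (M2 a b c d, mZ) (conjE (ut (W4 * inverse c)) (M2 a b c d, mZ)) in emul y y) = (msc V4, mZ)"
  by (cases a; cases b; cases c; cases d; simp add: ev_simps ut_def Let_def)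

definition tt :: "f4 \<Rightarrow> f4 \<Rightarrow> f4 \<Rightarrow> f4" where
  "tt a c d = (if a + d = W4 then V4 * inverse c else W4 * inverse c)"

lemma ns_c_aux2: "c \<noteq> Z4 \<Longrightarrow>
  emul (msc (inverse (tt a c d * (a + d + tt a c d * c))), mZ)
     (eadd (eadd (M2 a b c d, mZ) (conjE (ut (tt a c d)) (M2 a b c d, mZ))) (msc (tt a c d * c), mZ))
   = (M2 0 1 0 0, mZ)"
  by (cases a; cases b; cases c; cases d; simp add: ev_simps ut_def tt_def)

lemma ns_c:
  assumes "good R" "(M2 a b c d, mZ) \<in> R" "c \<noteq> Z4"
  shows "(A', mZ) \<in> R"
proof -
  note g = goodD[OF assms(1)]
  have dut: "mdet (ut t) = 1" for t by (simp add: ut_def)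
  have "emul (msc V4, mZ) (msc V4, mZ) = (msc W4, mZ)" by (simp add: msc_def mZ_def)
  moreover have "(msc V4, mZ) \<in> R"
    using ns_c_aux1[OF assms(3), of a b d] g(3)[OF assms(2) g(5)[OF dut assms(2)]] g(4)
    by (metis (no_types, lifting))
  ultimately have w: "(msc W4, mZ) \<in> R" using g(4) by metis
  note sc = scal_all[OF assms(1) w]
  note tl = ns_c_aux2[OF assms(3), of a d b]
  have e12: "(M2 0 1 0 0, mZ) \<in> R"
    unfolding tl[symmetric] by (intro g(3) g(4) g(5) sc assms(2) dut)
  have "conjE sw (M2 0 1 0 0, mZ) = (M2 0 0 1 0, mZ)" by (simp add: sw_def ev_simps)
  then have e21: "(M2 0 0 1 0, mZ) \<in> R" using g(5)[OF _ e12, of sw] by (simp add: sw_def)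
  have e11: "(M2 1 0 0 0, mZ) \<in> R" using g(4)[OF e12 e21] by (simp add: mZ_def)
  have e22: "(M2 0 0 0 1, mZ) \<in> R" using g(4)[OF e21 e12] by (simp add: mZ_def)
  obtain p q r s where A': "A' = M2 p q r s" by (cases A')
  have "(A', mZ) = eadd (eadd (emul (msc p, mZ) (M2 1 0 0 0, mZ)) (emul (msc q, mZ) (M2 0 1 0 0, mZ)))
      (eadd (emul (msc r, mZ) (M2 0 0 1 0, mZ)) (emul (msc s, mZ) (M2 0 0 0 1, mZ)))"
    by (simp add: A' msc_def mZ_def)
  also have "\<dots> \<in> R" by (intro g(3) g(4) sc e11 e12 e21 e22)
  finally show ?thesis .
qed

lemma ns:
  assumes "good R" "(A, mZ) \<in> R" "\<forall>l. A \<noteq> msc l"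
  shows "(A', mZ) \<in> R"
proof -
  note g = goodD[OF assms(1)]
  obtain a b c d where A: "A = M2 a b c d" by (cases A)
  have dsw: "mdet sw = 1" by (simp add: sw_def)
  have du: "mdet (ut O4) = 1" by (simp add: ut_def)
  show ?thesis
  proof (cases "c = Z4")
    case False then show ?thesis using ns_c[OF assms(1)] assms(2) A by blast
  next
    case c: True
    show ?thesis
    proof (cases "b = Z4")
      case False
      have "conjE sw (A, mZ) = (M2 d c b a, mZ)" by (simp add: A sw_def ev_simps)
      then have "(M2 d c b a, mZ) \<in> R" using g(5)[OF dsw assms(2)] by simp
      then show ?thesis using ns_c[OF assms(1)] False by blast
    next
      case b: True
      have ad: "a + d \<noteq> Z4" using assms(3) A b c
        by (cases a; cases d; auto simp: msc_def)
      have "conjE sw (conjE (ut O4) (A, mZ)) = (M2 d 0 (a+d) a, mZ)" using b c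
        by (cases a; cases d; simp add: A sw_def ut_def ev_simps)
      then have "(M2 d 0 (a+d) a, mZ) \<in> R" using g(5)[OF dsw g(5)[OF du assms(2)]] by simp
      then show ?thesis using ns_c[OF assms(1)] ad by blast
    qed
  qed
qed

lemma Bpart_aux: "B \<noteq> mZ \<Longrightarrow>
   snd (emul (mZ,B) (mZ,B)) = mZ \<and> snd (emul (mZ,B) (conjE g0 (mZ,B))) = mZ \<and>
  ((\<forall>l. fst (emul (mZ,B) (mZ,B)) \<noteq> msc l) \<or> (\<forall>l. fst (emul (mZ,B) (conjE g0 (mZ,B))) \<noteq> msc l))"
  unfolding f4_exhaust_all
  by (cases B; rename_tac a b c d; case_tac a; case_tac b; case_tac c; case_tac d;
      simp add: ev_simps g0_def)

lemma Bpart: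
  assumes "good R" "(mZ, B) \<in> R" "B \<noteq> mZ"
  shows "(A', mZ) \<in> R"
proof -
  note g = goodD[OF assms(1)]
  have dg: "mdet g0 = 1" by (simp add: g0_def)
  have i1: "emul (mZ,B) (mZ,B) \<in> R" using g(4)[OF assms(2) assms(2)] .
  have i2: "emul (mZ,B) (conjE g0 (mZ,B)) \<in> R" using g(4)[OF assms(2) g(5)[OF dg assms(2)]] .
  note bp = Bpart_aux[OF assms(3)]
  show ?thesis
  proof (cases "\<forall>l. fst (emul (mZ,B) (mZ,B)) \<noteq> msc l")
    case True
    have "(fst (emul (mZ,B) (mZ,B)), mZ) \<in> R" using i1 bp by (metis prod.collapse)
    then show ?thesis using ns[OF assms(1) _ True] by blast
  next
    case False
    then have T: "\<forall>l. fst (emul (mZ,B) (conjE g0 (mZ,B))) \<noteq> msc l" using bp by blast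
    have "(fst (emul (mZ,B) (conjE g0 (mZ,B))), mZ) \<in> R" using i2 bp by (metis prod.collapse)
    then show ?thesis using ns[OF assms(1) _ T] by blast
  qed
qed

lemma S3_aux: "B \<noteq> mZ \<Longrightarrow> \<exists>P1 Q1 P2 Q2.
  eadd (emul (P1,mZ) (emul (mZ,B) (Q1,mZ))) (emul (P2,mZ) (emul (mZ,B) (Q2,mZ))) = (mZ, mI)"
proof -
  assume B: "B \<noteq> mZ"
  obtain a b c d where Bd: "B = M2 a b c d" by (cases B)
  have "a \<noteq> 0 \<or> b \<noteq> 0 \<or> c \<noteq> 0 \<or> d \<noteq> 0" using B Bd by (auto simp: mZ_def)
  then show ?thesis
  proof (elim disjE)
    assume "a \<noteq> 0" then show ?thesis
      by (intro exI[of _ "M2 (inverse a) 0 0 0"] exI[of _ "M2 1 0 0 0"] exI[of _ "M2 0 0 (inverse a) 0"]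
          exI[of _ "M2 0 1 0 0"]) (cases a; simp add: Bd ev_simps)
  next
    assume "b \<noteq> 0" then show ?thesis
      by (intro exI[of _ "M2 (inverse b) 0 0 0"] exI[of _ "M2 0 0 1 0"] exI[of _ "M2 0 0 (inverse b) 0"]
          exI[of _ "M2 0 0 0 1"]) (cases b; simp add: Bd ev_simps)
  next
    assume "c \<noteq> 0" then show ?thesis
      by (intro exI[of _ "M2 0 (inverse c) 0 0"] exI[of _ "M2 1 0 0 0"] exI[of _ "M2 0 0 0 (inverse c)"]
          exI[of _ "M2 0 1 0 0"]) (cases c; simp add: Bd ev_simps)
  next
    assume "d \<noteq> 0" then show ?thesis
      by (intro exI[of _ "M2 0 (inverse d) 0 0"] exI[of _ "M2 0 0 1 0"] exI[of _ "M2 0 0 0 (inverse d)"]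
          exI[of _ "M2 0 0 0 1"]) (cases d; simp add: Bd ev_simps)
  qed
qed

lemma S3:
  assumes "good R" "\<forall>A. (A, mZ) \<in> R" "(mZ, B) \<in> R" "B \<noteq> mZ"
  shows "R = UNIV"
proof -
  note g = goodD[OF assms(1)]
  obtain P1 Q1 P2 Q2 where e: "eadd (emul (P1,mZ) (emul (mZ,B) (Q1,mZ))) (emul (P2,mZ) (emul (mZ,B) (Q2,mZ))) = (mZ, mI)"
    using S3_aux[OF assms(4)] by blast
  have sig: "(mZ, mI) \<in> R" unfolding e[symmetric] by (intro g(3) g(4) assms(2)[rule_format] assms(3))
  have "(A, C) \<in> R" for A C
  proof -
    have "(A, C) = eadd (A, mZ) (emul (C, mZ) (mZ, mI))"
      by (cases A; cases C; simp add: ev_simps)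
    also have "\<dots> \<in> R" by (intro g(3) g(4) assms(2)[rule_format] sig)
    finally show ?thesis .
  qed
  then show ?thesis by auto
qed

lemma madd_self: "madd A A = mZ" by (cases A; simp add: mZ_def)

theorem core:
  assumes "good R"
  shows "R = {(mZ,mZ),(mI,mZ)} \<or> R = {(msc l, mZ) | l. True} \<or> R = {(A, mZ) | A. True} \<or> R = UNIV"
proof -
  note g = goodD[OF assms]
  show ?thesis
  proof (cases "\<forall>A. (A, mZ) \<in> R")
    case allC: True
    show ?thesis
    proof (cases "\<exists>A B. (A,B) \<in> R \<and> B \<noteq> mZ")
      case True
      then obtain A B where "(A,B) \<in> R" "B \<noteq> mZ" by blast
      then show ?thesis using S3[OF assms allC] proj_in[OF assms] by blast
    next
      case False
      then have "R = {(A, mZ) | A. True}" using allC by auto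
      then show ?thesis by blast
    qed
  next
    case notC: False
    have sub: "x \<in> R \<Longrightarrow> \<exists>l. x = (msc l, mZ)" for x
    proof -
      assume x: "x \<in> R"
      obtain A B where AB: "x = (A,B)" by (cases x)
      have B: "B = mZ" using Bpart[OF assms] proj_in(2)[OF assms] x AB notC by blast
      have "\<exists>l. A = msc l" using ns[OF assms] proj_in(1)[OF assms] x AB notC by blast
      then show ?thesis using AB B by blast
    qed
    show ?thesis
    proof (cases "(msc W4, mZ) \<in> R")
      case True
      then have "R = {(msc l, mZ) | l. True}" using scal_all[OF assms True] sub by blast
      then show ?thesis by blast
    next
      case False
      have "x \<in> R \<Longrightarrow> x = (mZ,mZ) \<or> x = (mI,mZ)" for x
      proof -
        assume x: "x \<in> R"
        obtain l where l: "x = (msc l, mZ)" using sub[OF x] by blast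
        have "emul (msc V4, mZ) (msc V4, mZ) = (msc W4, mZ)" by (simp add: msc_def mZ_def)
        then have "l \<noteq> W4 \<and> l \<noteq> V4" using False x l g(4)[of x x] by auto
        then show ?thesis using l by (cases l; simp add: msc_def mZ_def mI_def)
      qed
      then have "R = {(mZ,mZ),(mI,mZ)}" using g(1) g(2) by blast
      then show ?thesis by blast
    qed
  qed
qed



fun vadd :: "f4 \<times> f4 \<Rightarrow> f4 \<times> f4 \<Rightarrow> f4 \<times> f4" where
  "vadd (a,b) (c,d) = (a+c, b+d)"
fun smul :: "f4 \<Rightarrow> f4 \<times> f4 \<Rightarrow> f4 \<times> f4" where
  "smul l (a,b) = (l*a, l*b)"
fun mvec :: "m2 \<Rightarrow> f4 \<times> f4 \<Rightarrow> f4 \<times> f4" where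
  "mvec (M2 a b c d) (x,y) = (a*x+b*y, c*x+d*y)"
fun vfrob :: "f4 \<times> f4 \<Rightarrow> f4 \<times> f4" where
  "vfrob (x,y) = (fr x, fr y)"
fun ev :: "e2 \<Rightarrow> f4 \<times> f4 \<Rightarrow> f4 \<times> f4" where
  "ev (A,B) p = vadd (mvec A p) (mvec B (vfrob p))"

lemma fr_add: "fr (a + b) = fr a + fr b" by (cases a; cases b; simp)
lemma fr_mul: "fr (a * b) = fr a * fr b" by (cases a; cases b; simp)
lemma fr_fr: "fr (fr a) = a" by (cases a; simp)

lemma ev_mul: "ev (emul x y) p = ev x (ev y p)"
  apply (cases x; cases y; cases p)
  apply (rename_tac A B C D p1 p2)
  apply (case_tac A; case_tac B; case_tac C; case_tac D)
  apply (simp add: fr_add fr_mul fr_fr algebra_simps)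
  done

lemma ev_add: "ev (eadd x y) p = vadd (ev x p) (ev y p)"
  apply (cases x; cases y; cases p)
  apply (rename_tac A B C D p1 p2)
  apply (case_tac A; case_tac B; case_tac C; case_tac D)
  apply (simp add: algebra_simps)
  done

lemma ev_vadd: "ev x (vadd p q) = vadd (ev x p) (ev x q)"
  apply (cases x; cases p; cases q)
  apply (rename_tac A B p1 p2 q1 q2)
  apply (case_tac A; case_tac B)
  apply (simp add: fr_add algebra_simps)
  done

lemma ev_one: "ev (mI, mZ) p = p" by (cases p; simp add: mI_def mZ_def)
lemma ev_zero: "ev (mZ, mZ) p = (0,0)" by (cases p; simp add: mZ_def)
lemma ev_sc: "ev (msc l, mZ) p = smul l p" by (cases p; simp add: msc_def mZ_def)

lemma key_inj: "a + b = c + d \<Longrightarrow> a*W4 + b*V4 = c*W4 + d*V4 \<Longrightarrow> a = c \<and> b = d"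
  by (cases a; cases b; cases c; cases d; simp)

lemma ev_inj: assumes "\<forall>p. ev x p = ev y p" shows "x = y"
proof -
  obtain A B C D where xy: "x = (A,B)" "y = (C,D)" by (cases x; cases y)
  obtain a1 a2 a3 a4 where A: "A = M2 a1 a2 a3 a4" by (cases A)
  obtain b1 b2 b3 b4 where B: "B = M2 b1 b2 b3 b4" by (cases B)
  obtain c1 c2 c3 c4 where C: "C = M2 c1 c2 c3 c4" by (cases C)
  obtain d1 d2 d3 d4 where D: "D = M2 d1 d2 d3 d4" by (cases D)
  have e1: "ev x (1,0) = ev y (1,0)" and e2: "ev x (W4,0) = ev y (W4,0)"
    and e3: "ev x (0,1) = ev y (0,1)" and e4: "ev x (0,W4) = ev y (0,W4)" using assms by blast+
  from e1 e2 have h1: "a1 + b1 = c1 + d1" "a1*W4 + b1*V4 = c1*W4 + d1*V4"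
     "a3 + b3 = c3 + d3" "a3*W4 + b3*V4 = c3*W4 + d3*V4"
    by (simp_all add: xy A B C D)
  from e3 e4 have h2: "a2 + b2 = c2 + d2" "a2*W4 + b2*V4 = c2*W4 + d2*V4"
     "a4 + b4 = c4 + d4" "a4*W4 + b4*V4 = c4*W4 + d4*V4"
    by (simp_all add: xy A B C D)
  note k1 = key_inj[OF h1(1,2)] key_inj[OF h1(3,4)] key_inj[OF h2(1,2)] key_inj[OF h2(3,4)]
  show ?thesis using k1 by (simp add: xy A B C D)
qed

lemma emul_C: "emul (A, mZ) (C, mZ) = (mmul A C, mZ)"
  by (cases A; cases C; simp add: mZ_def)

lemma mdet_mul: "mdet (mmul A C) = mdet A * mdet C"
  by (cases A; cases C; simp add: algebra_simps)

lemma adj_mul: "mdet g = 1 \<Longrightarrow> emul (g, mZ) (madj g, mZ) = (mI, mZ) \<and> emul (madj g, mZ) (g, mZ) = (mI, mZ)"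
  by (cases g; rename_tac a b c d; case_tac a; case_tac b; case_tac c; case_tac d; simp add: mZ_def mI_def)

lemma comm_w: "emul (A,B) (msc W4, mZ) = emul (msc W4, mZ) (A,B) \<longleftrightarrow> B = mZ"
proof -
  have k: "(b * V4 = W4 * b) \<longleftrightarrow> b = Z4" for b by (cases b; simp)
  show ?thesis by (cases A; cases B; simp add: msc_def mZ_def k mult.commute)
qed

definition SLlist :: "m2 list" where
  "SLlist = [M2 Z4 O4 O4 Z4, M2 Z4 O4 O4 O4, M2 Z4 O4 O4 W4, M2 Z4 O4 O4 V4,
    M2 Z4 W4 V4 Z4, M2 Z4 W4 V4 O4, M2 Z4 W4 V4 W4, M2 Z4 W4 V4 V4,
    M2 Z4 V4 W4 Z4, M2 Z4 V4 W4 O4, M2 Z4 V4 W4 W4, M2 Z4 V4 W4 V4,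
    M2 O4 Z4 Z4 O4, M2 O4 Z4 O4 O4, M2 O4 Z4 W4 O4, M2 O4 Z4 V4 O4,
    M2 O4 O4 Z4 O4, M2 O4 O4 O4 Z4, M2 O4 O4 W4 V4, M2 O4 O4 V4 W4,
    M2 O4 W4 Z4 O4, M2 O4 W4 O4 V4, M2 O4 W4 W4 W4, M2 O4 W4 V4 Z4,
    M2 O4 V4 Z4 O4, M2 O4 V4 O4 W4, M2 O4 V4 W4 Z4, M2 O4 V4 V4 V4,
    M2 W4 Z4 Z4 V4, M2 W4 Z4 O4 V4, M2 W4 Z4 W4 V4, M2 W4 Z4 V4 V4,
    M2 W4 O4 Z4 V4, M2 W4 O4 O4 Z4, M2 W4 O4 W4 W4, M2 W4 O4 V4 O4,
    M2 W4 W4 Z4 V4, M2 W4 W4 O4 W4, M2 W4 W4 W4 O4, M2 W4 W4 V4 Z4,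
    M2 W4 V4 Z4 V4, M2 W4 V4 O4 O4, M2 W4 V4 W4 Z4, M2 W4 V4 V4 W4,
    M2 V4 Z4 Z4 W4, M2 V4 Z4 O4 W4, M2 V4 Z4 W4 W4, M2 V4 Z4 V4 W4,
    M2 V4 O4 Z4 W4, M2 V4 O4 O4 Z4, M2 V4 O4 W4 O4, M2 V4 O4 V4 V4,
    M2 V4 W4 Z4 W4, M2 V4 W4 O4 O4, M2 V4 W4 W4 V4, M2 V4 W4 V4 Z4,
    M2 V4 V4 Z4 W4, M2 V4 V4 O4 V4, M2 V4 V4 W4 Z4, M2 V4 V4 V4 O4]"

lemma SL_sub: "{A. mdet A = 1} \<subseteq> set SLlist"
proof
  fix A assume "A \<in> {A. mdet A = 1}"
  then show "A \<in> set SLlist"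
    by (cases A; rename_tac a b c d; case_tac a; case_tac b; case_tac c; case_tac d; simp add: SLlist_def)
qed

lemma SL_card: "card {A. mdet A = 1} \<le> 60"
proof -
  have "length SLlist = 60" by (simp add: SLlist_def)
  then show ?thesis using card_mono[OF _ SL_sub] card_length[of SLlist] by simp
qed

lemma m2_range: "(UNIV :: m2 set) = range (\<lambda>(a::f4,b::f4,c::f4,d::f4). M2 a b c d)"
proof -
  have "A \<in> range (\<lambda>(a::f4,b::f4,c::f4,d::f4). M2 a b c d)" for A
  proof -
    obtain a b c d where A: "A = M2 a b c d" by (cases A)
    show ?thesis by (rule image_eqI[of _ _ "(a,b,c,d)"]) (simp_all add: A)
  qed
  then show ?thesis by blast
qed

instance m2 :: finite
proof
  show "finite (UNIV :: m2 set)" by (subst m2_range) (rule finite_imageI, simp)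
qed

lemma card_m2: "CARD(m2) = 256"
proof -
  define f where "f = (\<lambda>(a::f4,b::f4,c::f4,d::f4). M2 a b c d)"
  have e: "(UNIV :: m2 set) = range f"
    unfolding f_def by (rule m2_range)
  have i: "inj f" unfolding f_def by (auto simp: inj_def)
  have "CARD(m2) = card (range f)" using e by simp
  also have "\<dots> = CARD(f4 \<times> f4 \<times> f4 \<times> f4)" by (rule card_image[OF i])
  finally show ?thesis by (simp add: card_f4)
qed

lemma card_e2: "CARD(e2) = 65536" by (simp add: card_m2)


declare add_bit_eq_xor[simp del] mult_bit_eq_and[simp del]

instance bit :: finite
proof
  have "(UNIV :: bit set) = {0, 1}" by (auto intro: bit.exhaust)
  then show "finite (UNIV :: bit set)" by (metis finite.emptyI finite_insert)
qed

lemma card_bit: "CARD(bit) = 2"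
proof -
  have "(UNIV :: bit set) = {0, 1}" by (auto intro: bit.exhaust)
  then show ?thesis by (metis card_2_iff zero_neq_one)
qed

lemma card_vec2: "CARD(vec2) = 16" by (simp add: card_bit)
lemma card_end2: "CARD(end2) = 65536" by (simp add: card_bit)

lemma bit_add_self[simp]: "(b::bit) + b = 0" by (cases b) simp_all
lemma vec_add_self[simp]: "(x::bit^'n) + x = 0" by (simp add: vec_eq_iff)
lemma vec_add_self2[simp]: "(x::bit^'n) + (x + y) = y"
  by (metis add.assoc vec_add_self add_0)
lemma mat_add_self[simp]: "(M::bit^'n^'m) + M = 0" by (simp add: vec_eq_iff)
lemma mat_add_self2[simp]: "(M::bit^'n^'m) + (M + N) = N"
  by (metis add.assoc mat_add_self add_0)
lemma vec_add_eq0: "(x::bit^'n) + y = 0 \<Longrightarrow> x = y"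
  by (metis vec_add_self2 add_0_right)
lemma mat_add_eq0: "(x::bit^'n^'m) + y = 0 \<Longrightarrow> x = y"
  by (metis mat_add_self2 add_0_right)

lemma matrix_add_rdistrib: "((A::'a::semiring_1^'n^'m) + B) ** C = A ** C + B ** C"
  by (vector matrix_matrix_mult_def sum.distrib[symmetric] field_simps)

fun phi :: "end2 \<Rightarrow> f4 \<Rightarrow> end2" where
  "phi w Z4 = 0" | "phi w O4 = mat 1" | "phi w W4 = w" | "phi w V4 = w + mat 1"

definition iota :: "end2 \<Rightarrow> vec2 \<Rightarrow> vec2 \<Rightarrow> f4 \<times> f4 \<Rightarrow> vec2" where
  "iota w v1 v2 p = phi w (fst p) *v v1 + phi w (snd p) *v v2"

definition Psi :: "end2 \<Rightarrow> vec2 \<Rightarrow> vec2 \<Rightarrow> e2 \<Rightarrow> end2" where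
  "Psi w v1 v2 x = matrix (\<lambda>y. iota w v1 v2 (ev x (inv_into UNIV (iota w v1 v2) y)))"

context
  fixes w :: end2 and v1 v2 :: vec2
  assumes ww: "w ** w = w + mat 1"
    and v1: "v1 \<noteq> 0"
    and v2: "\<forall>a. v2 \<noteq> phi w a *v v1"
begin

lemma wv: "w *v (w *v x) = w *v x + x"
  using ww by (simp add: matrix_vector_mul_assoc matrix_vector_mult_add_rdistrib)

lemma phi_add: "phi w (a + b) *v x = phi w a *v x + phi w b *v x"
  by (cases a; cases b; simp add: matrix_vector_mult_add_rdistrib add_ac)

lemma phi_mul: "phi w (a * b) *v x = phi w a *v (phi w b *v x)"
  by (cases a; cases b; simp add: matrix_vector_mult_add_rdistrib matrix_vector_right_distrib wv add_ac)

lemma phi_inj0: "a \<noteq> 0 \<Longrightarrow> phi w a *v x = 0 \<Longrightarrow> x = 0"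
  by (metis matrix_vector_mult_0_right phi_mul field_class.field_inverse phi.simps(2)
      matrix_vector_mul_lid f4_one)

lemma iota_add: "iota w v1 v2 (vadd p q) = iota w v1 v2 p + iota w v1 v2 q"
  by (cases p; cases q; simp add: iota_def phi_add add_ac)

lemma iota_smul: "iota w v1 v2 (smul l p) = phi w l *v iota w v1 v2 p"
  by (cases p; simp add: iota_def phi_mul matrix_vector_right_distrib)

lemma iota_zero: "iota w v1 v2 (Z4,Z4) = 0" by (simp add: iota_def)

lemma iota_0: assumes "iota w v1 v2 p = 0" shows "p = (0,0)"
proof -
  obtain a b where p: "p = (a,b)" by (cases p)
  have b: "b = 0"
  proof (rule ccontr)
    assume b0: "b \<noteq> 0"
    have "iota w v1 v2 (smul (inverse b) (a,b)) = phi w (inverse b) *v iota w v1 v2 (a,b)"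
      by (rule iota_smul)
    also have "\<dots> = 0" using assms p by simp
    finally have "iota w v1 v2 (inverse b * a, inverse b * b) = 0" by simp
    moreover have "inverse b * b = O4" using b0 by (metis field_class.field_inverse f4_one)
    ultimately have "phi w (inverse b * a) *v v1 + v2 = 0"
      by (simp add: iota_def)
    then have "v2 = phi w (inverse b * a) *v v1" using vec_add_eq0 by metis
    then show False using v2 by blast
  qed
  have "phi w a *v v1 = 0" using assms p b by (simp add: iota_def)
  then have "a = 0" using phi_inj0 v1 by blast
  then show ?thesis using p b by simp
qed

lemma vadd_self: "vadd p p = (0,0)" by (cases p; simp)
lemma f4_add_eq0: "(a::f4) + c = Z4 \<longleftrightarrow> a = c" by (cases a; cases c; simp)
lemma vadd_eq0: "vadd p q = (0,0) \<Longrightarrow> p = q" by (cases p; cases q; simp add: f4_add_eq0)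

lemma iota_inj: "inj (iota w v1 v2)"
proof (rule injI)
  fix p q assume "iota w v1 v2 p = iota w v1 v2 q"
  then have "iota w v1 v2 (vadd p q) = 0" by (simp add: iota_add)
  then show "p = q" using iota_0 vadd_eq0 by blast
qed

lemma iota_surj: "surj (iota w v1 v2)"
proof -
  have "card (range (iota w v1 v2)) = CARD(f4 \<times> f4)" using card_image[OF iota_inj] by simp
  also have "\<dots> = CARD(vec2)" by (simp add: card_f4 card_bit)
  finally show ?thesis by (intro card_subset_eq) simp_all
qed

lemma iota_bij: "bij (iota w v1 v2)" using iota_inj iota_surj by (simp add: bij_def)

abbreviation "io \<equiv> iota w v1 v2"
abbreviation "ioi \<equiv> inv_into UNIV (iota w v1 v2)"

lemma io_ioi[simp]: "io (ioi y) = y" by (meson iota_surj surj_f_inv_f)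
lemma ioi_io[simp]: "ioi (io p) = p" by (meson iota_inj inv_f_f)

lemma ioi_add: "ioi (y + z) = vadd (ioi y) (ioi z)"
  by (metis io_ioi iota_add ioi_io)

lemma lin: "Vector_Spaces.linear (*s) (*s) (\<lambda>y. io (ev x (ioi y)))"
proof -
  have add: "io (ev x (ioi (y + z))) = io (ev x (ioi y)) + io (ev x (ioi z))" for y z
    by (simp add: ioi_add ev_vadd iota_add)
  have z: "io (ev x (ioi 0)) = 0"
    using add[of 0 0] by simp
  have sc: "io (ev x (ioi (c *s y))) = c *s io (ev x (ioi y))" for c y
    by (cases c) (simp_all add: z)
  show ?thesis
    by (subst Vector_Spaces.linear_iff) (use add sc vec.vector_space_axioms in blast)
qed

lemma Psi_apply: "Psi w v1 v2 x *v y = io (ev x (ioi y))"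
  unfolding Psi_def by (rule matrix_works[OF lin])

lemma Psi_mul: "Psi w v1 v2 (emul x y) = Psi w v1 v2 x ** Psi w v1 v2 y"
  by (simp add: matrix_eq Psi_apply ev_mul flip: matrix_vector_mul_assoc)

lemma Psi_add: "Psi w v1 v2 (eadd x y) = Psi w v1 v2 x + Psi w v1 v2 y"
  by (simp add: matrix_eq Psi_apply ev_add iota_add matrix_vector_mult_add_rdistrib)

lemma Psi_one: "Psi w v1 v2 (mI, mZ) = mat 1"
  by (simp add: matrix_eq Psi_apply ev_one del: ev.simps)

lemma Psi_zero: "Psi w v1 v2 (mZ, mZ) = 0"
  by (simp add: matrix_eq Psi_apply ev_zero iota_zero del: ev.simps)

lemma Psi_sc: "Psi w v1 v2 (msc l, mZ) = phi w l"
  by (simp add: matrix_eq Psi_apply ev_sc iota_smul del: ev.simps smul.simps)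

lemma Psi_inj: "inj (Psi w v1 v2)"
proof (rule injI)
  fix x y assume "Psi w v1 v2 x = Psi w v1 v2 y"
  then have "\<forall>z. io (ev x (ioi z)) = io (ev y (ioi z))" by (metis Psi_apply)
  then have "\<forall>p. ev x p = ev y p" by (metis ioi_io iota_inj inj_eq)
  then show "x = y" by (rule ev_inj)
qed

lemma Psi_surj: "surj (Psi w v1 v2)"
proof -
  have "card (range (Psi w v1 v2)) = CARD(e2)" using card_image[OF Psi_inj] by simp
  also have "\<dots> = CARD(end2)" by (simp add: card_m2 card_bit)
  finally show ?thesis by (intro card_subset_eq) simp_all
qed

end


lemma cent_mul: "a \<in> centralizer S \<Longrightarrow> b \<in> centralizer S \<Longrightarrow> a ** b \<in> centralizer S"
  unfolding centralizer_def by (auto simp: matrix_mul_assoc) (metis matrix_mul_assoc)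

lemma cent_add: "a \<in> centralizer S \<Longrightarrow> b \<in> centralizer S \<Longrightarrow> a + b \<in> centralizer S"
  unfolding centralizer_def by (simp add: matrix_add_ldistrib matrix_add_rdistrib)

lemma cent_0: "0 \<in> centralizer S" by (simp add: centralizer_def)
lemma cent_1: "mat 1 \<in> centralizer S" by (simp add: centralizer_def)

lemma matrix_inv_unique:
  fixes A B :: "'a::semiring_1^'n^'n"
  assumes h: "A ** B = mat 1" "B ** A = mat 1"
  shows "matrix_inv A = B"
proof -
  have "A ** matrix_inv A = mat 1 \<and> matrix_inv A ** A = mat 1"
    unfolding matrix_inv_def by (rule someI[of _ B]) (use h in simp)
  then have "matrix_inv A = matrix_inv A ** (A ** B)" using h by simp
  also have "\<dots> = (matrix_inv A ** A) ** B" by (simp add: matrix_mul_assoc)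
  also have "\<dots> = B" using \<open>A ** matrix_inv A = mat 1 \<and> matrix_inv A ** A = mat 1\<close> by simp
  finally show ?thesis .
qed

lemma mat1_ne0: "mat 1 \<noteq> (0::end2)"
proof
  assume "mat 1 = (0::end2)"
  then have "(mat 1 :: end2) $ 1 $ 1 = 0 $ 1 $ 1" by simp
  then show False by (simp add: mat_def)
qed

lemma card_G60:
  assumes "mat_monoid G \<cong> alt_group 5"
  shows "card G = 60"
proof -
  have "card (carrier (mat_monoid G)) = card (carrier (alt_group 5))" using iso_same_card[OF assms] .
  moreover have "2 * card (carrier (alt_group 5)) = fact 5" by (rule alt_group_card_carrier) simp
  moreover have "(fact 5 :: nat) = 120" by (simp add: fact_numeral)
  ultimately show ?thesis by (simp add: mat_monoid_def)
qed

theorem theorem4p1: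
  fixes G R :: "end2 set"
  assumes G_group: "group (mat_monoid G)"
    and G_A5: "mat_monoid G \<cong> alt_group 5"
    and simple: "simple_module G"
    and F4: "field (mat_ring (centralizer G)) \<and> card (centralizer G) = 4"
    and R_alg: "f2_subalgebra R"
    and R_stable: "\<forall>u\<in>G. \<forall>r\<in>R. u ** r ** matrix_inv u \<in> R"
  shows "R = {0, mat 1} \<or> R = centralizer G \<or>
         R = centralizer (centralizer G) \<or> R = UNIV"
proof -
  define Cg where "Cg = centralizer G"
  have fld: "field (mat_ring Cg)" and c4: "card Cg = 4" using F4 by (auto simp: Cg_def)
  have dom: "domain (mat_ring Cg)" using fld by (rule field.axioms(1))
  have integral: "a \<in> Cg \<Longrightarrow> b \<in> Cg \<Longrightarrow> a ** b = 0 \<Longrightarrow> a = 0 \<or> b = 0" for a b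
    using domain.integral[OF dom, of a b] by (simp add: mat_ring_def)
  have fin: "finite Cg" using c4 card.infinite by fastforce
  have c0: "0 \<in> Cg" and c1: "mat 1 \<in> Cg" by (simp_all add: Cg_def cent_0 cent_1)
  have "\<exists>w\<in>Cg. w \<noteq> 0 \<and> w \<noteq> mat 1"
  proof (rule ccontr)
    assume "\<not> (\<exists>w\<in>Cg. w \<noteq> 0 \<and> w \<noteq> mat 1)"
    then have "Cg \<subseteq> {0, mat 1}" by auto
    then have "card Cg \<le> card {0, mat 1 :: end2}" by (rule card_mono[rotated]) simp
    also have "\<dots> \<le> 2" by (rule card_insert_le_m1) simp_all
    finally show False using c4 by simp
  qed
  then obtain w where wC: "w \<in> Cg" and w0: "w \<noteq> 0" and w1: "w \<noteq> mat 1" by blast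
  have w2C: "w ** w \<in> Cg" using wC by (simp add: Cg_def cent_mul)
  have w1C: "w + mat 1 \<in> Cg" using wC c1 by (simp add: Cg_def cent_add)
  have d1: "w + mat 1 \<noteq> 0" using w1 mat_add_eq0 by blast
  have d2: "w + mat 1 \<noteq> mat 1"
  proof
    assume "w + mat 1 = mat 1"
    then have "w + mat 1 + mat 1 = mat 1 + mat 1" by simp
    then show False using w0 by (simp add: add.assoc)
  qed
  have d3: "w + mat 1 \<noteq> w"
  proof
    assume "w + mat 1 = w"
    then have "w + (w + mat 1) = w + w" by simp
    then show False using mat1_ne0 by simp
  qed
  have n0: "w ** w \<noteq> 0" using integral wC w0 by blast
  have nw: "w ** w \<noteq> w"
  proof
    assume e: "w ** w = w"
    have "w ** (w + mat 1) = 0" by (simp add: matrix_add_ldistrib e)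
    then have "w + mat 1 = 0" using integral[OF wC w1C] w0 by blast
    then show False using d1 by blast
  qed
  have n1: "w ** w \<noteq> mat 1"
  proof
    assume e: "w ** w = mat 1"
    have "(w + mat 1) ** (w + mat 1) = 0"
      by (simp add: matrix_add_ldistrib matrix_add_rdistrib e add_ac)
    then have "w + mat 1 = 0" using integral[OF w1C w1C] by blast
    then show False using d1 by blast
  qed
  have Cg_eq: "Cg = {0, mat 1, w, w + mat 1}"
  proof -
    have sub: "{0, mat 1, w, w + mat 1} \<subseteq> Cg" by (simp only: insert_subset c0 c1 wC w1C empty_subsetI simp_thms)
    have "card {0, mat 1, w, w + mat 1} = 4"
      using w0 w1 d1 d2 d3 mat1_ne0 w0[symmetric] w1[symmetric] d1[symmetric] d2[symmetric] d3[symmetric] mat1_ne0[symmetric]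
      by (simp add: card_insert_if)
    then show ?thesis using card_subset_eq[OF fin sub] c4 by simp
  qed
  have ww: "w ** w = w + mat 1" using w2C n0 n1 nw Cg_eq by auto
  define v1 :: vec2 where "v1 = axis 1 1"
  have v1: "v1 \<noteq> 0" unfolding v1_def by (metis axis_eq_0_iff one_neq_zero)
  have "range (\<lambda>a. phi w a *v v1) \<noteq> UNIV"
  proof
    assume e: "range (\<lambda>a. phi w a *v v1) = UNIV"
    have "card (range (\<lambda>a. phi w a *v v1)) \<le> CARD(f4)" by (rule card_image_le) simp
    then have "CARD(vec2) \<le> CARD(f4)" by (simp only: e)
    then show False by (simp add: card_f4 card_bit)
  qed
  then obtain v2 where v2: "\<forall>a. v2 \<noteq> phi w a *v v1" by blast
  define Psi' where "Psi' = Psi w v1 v2"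
  note P_mul = Psi_mul[OF ww v1 v2, folded Psi'_def]
  note P_add = Psi_add[OF ww v1 v2, folded Psi'_def]
  note P_one = Psi_one[OF ww v1 v2, folded Psi'_def]
  note P_zero = Psi_zero[OF ww v1 v2, folded Psi'_def]
  note P_sc = Psi_sc[OF ww v1 v2, folded Psi'_def]
  note P_inj = Psi_inj[OF ww v1 v2, folded Psi'_def]
  note P_surj = Psi_surj[OF ww v1 v2, folded Psi'_def]
  have P_w: "Psi' (msc W4, mZ) = w" by (simp add: P_sc)
  have Cg_Psi: "Cg = (\<lambda>l. Psi' (msc l, mZ)) ` UNIV"
  proof -
    have "range (phi w) = {0, mat 1, w, w + mat 1}"
      by (auto simp: UNIV_f4)
    then show ?thesis using Cg_eq by (simp add: P_sc)
  qed
  have cc: "centralizer Cg = {M. M ** w = w ** M}"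
  proof
    show "centralizer Cg \<subseteq> {M. M ** w = w ** M}" using wC by (auto simp: centralizer_def)
    show "{M. M ** w = w ** M} \<subseteq> centralizer Cg"
      by (auto simp: centralizer_def Cg_eq matrix_add_ldistrib matrix_add_rdistrib)
  qed
  have comm_iff: "Psi' x ** w = w ** Psi' x \<longleftrightarrow> snd x = mZ" for x
  proof -
    have "Psi' x ** w = w ** Psi' x \<longleftrightarrow> Psi' (emul x (msc W4, mZ)) = Psi' (emul (msc W4, mZ) x)"
      by (simp add: P_mul P_w)
    also have "\<dots> \<longleftrightarrow> emul x (msc W4, mZ) = emul (msc W4, mZ) x" using P_inj by (simp add: inj_eq)
    also have "\<dots> \<longleftrightarrow> snd x = mZ" by (cases x) (simp only: comm_w snd_conv)
    finally show ?thesis .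
  qed
  have cc_Psi: "centralizer Cg = Psi' ` {(A, mZ) | A. True}"
  proof
    show "centralizer Cg \<subseteq> Psi' ` {(A, mZ) | A. True}"
    proof
      fix M assume "M \<in> centralizer Cg"
      then have M: "M ** w = w ** M" using cc by auto
      obtain x where x: "M = Psi' x" using P_surj by (metis surjD)
      then have "snd x = mZ" using M comm_iff by simp
      then show "M \<in> Psi' ` {(A, mZ) | A. True}" using x by (metis (mono_tags, lifting) mem_Collect_eq prod.collapse image_eqI)
    qed
    show "Psi' ` {(A, mZ) | A. True} \<subseteq> centralizer Cg"
      using comm_iff cc by auto
  qed
  have G_sub: "G \<subseteq> centralizer Cg"
    by (auto simp: Cg_def centralizer_def)
  define Gm where "Gm = {A. Psi' (A, mZ) \<in> G}"
  have G_eq: "G = (\<lambda>A. Psi' (A, mZ)) ` Gm"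
  proof
    show "G \<subseteq> (\<lambda>A. Psi' (A, mZ)) ` Gm"
    proof
      fix g assume g: "g \<in> G"
      then obtain A where "g = Psi' (A, mZ)" using G_sub cc_Psi by blast
      then show "g \<in> (\<lambda>A. Psi' (A, mZ)) ` Gm" using g by (auto simp: Gm_def)
    qed
    show "(\<lambda>A. Psi' (A, mZ)) ` Gm \<subseteq> G" by (auto simp: Gm_def)
  qed
  have injA: "inj (\<lambda>A. Psi' (A, mZ))" using P_inj by (auto simp: inj_def)
  have cardGm: "card Gm = 60"
    using card_G60[OF G_A5] G_eq card_image[OF inj_on_subset[OF injA subset_UNIV, of Gm]] by simp
  define dl where "dl M = mdet (fst (inv_into UNIV Psi' M))" for M
  have dl_Psi: "dl (Psi' (A, mZ)) = mdet A" for A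
    by (simp add: dl_def inv_into_f_f[OF P_inj])
  have carr: "carrier (mat_monoid G) = G" "mult (mat_monoid G) = (**)" "one (mat_monoid G) = mat 1"
    by (simp_all add: mat_monoid_def)
  interpret MG: group "mat_monoid G" by (rule G_group)
  have Gm_mul: "g1 \<in> G \<Longrightarrow> g2 \<in> G \<Longrightarrow> dl (g1 ** g2) = dl g1 * dl g2" for g1 g2
  proof -
    assume "g1 \<in> G" "g2 \<in> G"
    then obtain A1 A2 where "g1 = Psi' (A1, mZ)" "g2 = Psi' (A2, mZ)" using G_eq by blast
    then show ?thesis by (simp add: P_mul[symmetric] emul_C dl_Psi mdet_mul del: emul.simps)
  qed
  have dl_one: "dl (mat 1) = 1" using dl_Psi[of mI] P_one by (simp add: mI_def)
  have dl_inv: "a \<in> G \<Longrightarrow> dl (m_inv (mat_monoid G) a) * dl a = 1" for a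
  proof -
    assume a: "a \<in> G"
    have ic: "m_inv (mat_monoid G) a \<in> G" using MG.inv_closed[of a] a carr by simp
    have "m_inv (mat_monoid G) a ** a = mat 1" using MG.l_inv[of a] a carr by simp
    then show ?thesis using Gm_mul[OF ic a] dl_one by simp
  qed
  have perfect: "\<forall>g\<in>G. dl g = 1"
  proof -
    obtain h where h: "h \<in> iso (alt_group 5) (mat_monoid G)"
      using MG.iso_sym[OF G_A5] unfolding is_iso_def by blast
    have gh: "group_hom (alt_group 5) (mat_monoid G) h"
      using h by (simp add: group_hom_def group_hom_axioms_def alt_group_is_group G_group iso_imp_homomorphism)
    have himg: "h ` carrier (alt_group 5) = G" using h carr by (simp add: iso_iff)
    have "derived (mat_monoid G) (h ` carrier (alt_group 5)) = h ` derived (alt_group 5) (carrier (alt_group 5))"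
      by (rule group_hom.derived_img[OF gh]) simp
    then have der: "derived (mat_monoid G) G = G" using himg derived_alt_group_const[of 5] by simp
    define H where "H = {g \<in> G. dl g = 1}"
    have sg: "subgroup H (mat_monoid G)"
    proof (rule MG.subgroupI)
      show "H \<subseteq> carrier (mat_monoid G)" using carr by (auto simp: H_def)
      show "H \<noteq> {}" using MG.one_closed carr dl_one by (auto simp: H_def)
      show "m_inv (mat_monoid G) a \<in> H" if "a \<in> H" for a
        using that dl_inv[of a] MG.inv_closed[of a] carr by (auto simp: H_def)
      show "a \<otimes>\<^bsub>mat_monoid G\<^esub> b \<in> H" if "a \<in> H" "b \<in> H" for a b
        using that Gm_mul[of a b] MG.m_closed[of a b] carr by (auto simp: H_def)
    qed
    have "derived_set (mat_monoid G) G \<subseteq> H"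
    proof
      fix x assume "x \<in> derived_set (mat_monoid G) G"
      then obtain h1 h2 where hh: "h1 \<in> G" "h2 \<in> G"
        and x: "x = h1 ** h2 ** m_inv (mat_monoid G) h1 ** m_inv (mat_monoid G) h2"
        using carr by auto
      have i1: "m_inv (mat_monoid G) h1 \<in> G" and i2: "m_inv (mat_monoid G) h2 \<in> G"
        using MG.inv_closed hh carr by auto
      have c12: "h1 ** h2 \<in> G" using MG.m_closed hh carr by auto
      have c3: "h1 ** h2 ** m_inv (mat_monoid G) h1 \<in> G" using MG.m_closed[of "h1 ** h2"] c12 i1 carr by auto
      have xG: "x \<in> G" using MG.m_closed c3 i2 carr x by auto
      have "dl x = dl h1 * dl h2 * dl (m_inv (mat_monoid G) h1) * dl (m_inv (mat_monoid G) h2)"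
        using x Gm_mul c12 c3 i1 i2 hh by simp
      also have "\<dots> = (dl (m_inv (mat_monoid G) h1) * dl h1) * (dl (m_inv (mat_monoid G) h2) * dl h2)"
        by (simp add: algebra_simps)
      also have "\<dots> = 1" using dl_inv hh by simp
      finally show "x \<in> H" using xG by (simp add: H_def)
    qed
    then have "derived (mat_monoid G) G \<subseteq> H"
      unfolding derived_def by (rule MG.generate_subgroup_incl[OF _ sg])
    then show ?thesis using der by (auto simp: H_def)
  qed
  have Gm_SL: "Gm = {A. mdet A = 1}"
  proof (rule card_seteq)
    show "finite {A. mdet A = 1}" by simp
    show "Gm \<subseteq> {A. mdet A = 1}" using perfect dl_Psi by (auto simp: Gm_def)
    show "card {A. mdet A = 1} \<le> card Gm" using SL_card cardGm by simp
  qed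
  define R' where "R' = Psi' -` R"
  have R_eq: "R = Psi' ` R'" unfolding R'_def using P_surj by (simp add: surj_image_vimage_eq)
  have Ralg: "0 \<in> R" "mat 1 \<in> R" "\<And>x y. x \<in> R \<Longrightarrow> y \<in> R \<Longrightarrow> x + y \<in> R \<and> x ** y \<in> R"
    using R_alg by (auto simp: f2_subalgebra_def)
  have "good R'"
    unfolding good_def
  proof (intro conjI ballI allI impI)
    show "(mZ, mZ) \<in> R'" using Ralg P_zero by (simp add: R'_def)
    show "(mI, mZ) \<in> R'" using Ralg P_one by (simp add: R'_def)
    show "eadd x y \<in> R'" if "x \<in> R'" "y \<in> R'" for x y using that Ralg by (simp add: R'_def P_add)
    show "emul x y \<in> R'" if "x \<in> R'" "y \<in> R'" for x y using that Ralg by (simp add: R'_def P_mul)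
    show "conjE g x \<in> R'" if "mdet g = 1" "x \<in> R'" for g x
    proof -
      have uG: "Psi' (g, mZ) \<in> G" using that(1) Gm_SL by (auto simp: Gm_def)
      have a1: "Psi' (g, mZ) ** Psi' (madj g, mZ) = mat 1" and a2: "Psi' (madj g, mZ) ** Psi' (g, mZ) = mat 1"
        using adj_mul[OF that(1)] by (simp_all add: P_mul[symmetric] P_one)
      have mi: "matrix_inv (Psi' (g, mZ)) = Psi' (madj g, mZ)" by (rule matrix_inv_unique[OF a1 a2])
      have "Psi' (conjE g x) = Psi' (g, mZ) ** Psi' x ** matrix_inv (Psi' (g, mZ))"
        by (simp add: conjE_def P_mul mi)
      also have "\<dots> \<in> R" using R_stable uG that(2) by (simp add: R'_def)
      finally show ?thesis by (simp add: R'_def)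
    qed
  qed
  from core[OF this] show ?thesis
  proof (elim disjE)
    assume "R' = {(mZ, mZ), (mI, mZ)}"
    then have "R = {0, mat 1}" using R_eq P_zero P_one by simp
    then show ?thesis by blast
  next
    assume "R' = {(msc l, mZ) | l. True}"
    then have "R = Cg" using R_eq Cg_Psi by auto
    then show ?thesis by (simp add: Cg_def)
  next
    assume "R' = {(A, mZ) | A. True}"
    then have "R = centralizer Cg" using R_eq cc_Psi by simp
    then show ?thesis by (simp add: Cg_def)
  next
    assume "R' = UNIV"
    then have "R = UNIV" using R_eq P_surj by simp
    then show ?thesis by blast
  qed
qed

end
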